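(* Let $k>0$ and consider the case $\Lambda=1$. The minimum of $(\Delta\bm{x})^2$ over all unit vectors of the $3$-dimensional space $\mathcal{H}_1$ equals $\frac{7}{32}$, and it is attained at $$\underline{\bm{\chi}}=\frac{\sqrt5}{4}\left(\psi_{-1}+\psi_1\right)+\sqrt{\tfrac38}\,\psi_0 .$$
   Context: (Fuzzy circle $S^1_\Lambda$ with $\Lambda=1$.) $\mathcal{H}_1$ has orthonormal basis $\psi_{-1},\psi_0,\psi_1$. Operators: $x_+\psi_n=b_{n+1}\psi_{n+1}$, $x_-\psi_n=b_n\psi_{n-1}$ where $b_n=\sqrt{1+n(n-1)/k}$ for $n\in\{0,1\}$ and $b_n=0$ otherwise (so $b_0=b_1=1$, $b_{-1}=b_2=0$); $x_1=(x_++x_-)/2$, $x_2=(x_+-x_-)/(2i)$, $\bm{x}^2=x_1^2+x_2^2$. For a unit vector $\bm{\chi}$, $\langle A\rangle=\langle\bm{\chi},A\bm{\chi}\rangle$ and $(\Delta\bm{x})^2=\langle\bm{x}^2\rangle-\langle x_1\rangle^2-\langle x_2\rangle^2$. *)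

theory Defs
  imports Complex_Main
begin

text \<open>Fuzzy circle with Lambda = 1. A vector of H_1 is represented by its coefficient
function chi :: int => complex w.r.t. the orthonormal basis psi_n (n in {-1,0,1});
chi n = <psi_n, chi>.\<close>

definition Hidx :: "int set" where "Hidx = {-1, 0, 1}"

definition inH1 :: "(int \<Rightarrow> complex) \<Rightarrow> bool" where
  "inH1 \<chi> \<longleftrightarrow> (\<forall>n. n \<notin> Hidx \<longrightarrow> \<chi> n = 0)"

definition inner_H :: "(int \<Rightarrow> complex) \<Rightarrow> (int \<Rightarrow> complex) \<Rightarrow> complex" where
  "inner_H \<phi> \<chi> = (\<Sum>n\<in>Hidx. cnj (\<phi> n) * \<chi> n)"

definition unit_H :: "(int \<Rightarrow> complex) \<Rightarrow> bool" where
  "unit_H \<chi> \<longleftrightarrow> inH1 \<chi> \<and> inner_H \<chi> \<chi> = 1"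

definition bcoef :: "real \<Rightarrow> int \<Rightarrow> complex" where
  "bcoef k n = (if n \<in> {0, 1} then complex_of_real (sqrt (1 + real_of_int (n * (n - 1)) / k)) else 0)"

text \<open>x_+ psi_n = b_{n+1} psi_{n+1}, x_- psi_n = b_n psi_{n-1}, on coefficients.\<close>
definition xplus :: "real \<Rightarrow> (int \<Rightarrow> complex) \<Rightarrow> (int \<Rightarrow> complex)" where
  "xplus k \<chi> = (\<lambda>n. bcoef k n * \<chi> (n - 1))"

definition xminus :: "real \<Rightarrow> (int \<Rightarrow> complex) \<Rightarrow> (int \<Rightarrow> complex)" where
  "xminus k \<chi> = (\<lambda>n. bcoef k (n + 1) * \<chi> (n + 1))"

definition x1op :: "real \<Rightarrow> (int \<Rightarrow> complex) \<Rightarrow> (int \<Rightarrow> complex)" where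
  "x1op k \<chi> = (\<lambda>n. (xplus k \<chi> n + xminus k \<chi> n) / 2)"

definition x2op :: "real \<Rightarrow> (int \<Rightarrow> complex) \<Rightarrow> (int \<Rightarrow> complex)" where
  "x2op k \<chi> = (\<lambda>n. (xplus k \<chi> n - xminus k \<chi> n) / (2 * \<i>))"

definition xsqop :: "real \<Rightarrow> (int \<Rightarrow> complex) \<Rightarrow> (int \<Rightarrow> complex)" where
  "xsqop k \<chi> = (\<lambda>n. x1op k (x1op k \<chi>) n + x2op k (x2op k \<chi>) n)"

definition expect :: "((int \<Rightarrow> complex) \<Rightarrow> (int \<Rightarrow> complex)) \<Rightarrow> (int \<Rightarrow> complex) \<Rightarrow> complex" where
  "expect A \<chi> = inner_H \<chi> (A \<chi>)"

text \<open>(Delta x)^2 = <x^2> - <x_1>^2 - <x_2>^2 (a complex number that is real for unit chi).\<close>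
definition uncert :: "real \<Rightarrow> (int \<Rightarrow> complex) \<Rightarrow> complex" where
  "uncert k \<chi> = expect (xsqop k) \<chi> - (expect (x1op k) \<chi>)\<^sup>2 - (expect (x2op k) \<chi>)\<^sup>2"

definition chi_min :: "int \<Rightarrow> complex" where
  "chi_min n = (if n = -1 \<or> n = 1 then complex_of_real (sqrt 5 / 4)
                else if n = 0 then complex_of_real (sqrt (3/8)) else 0)"

end

theory Submission imports Defs begin
lemma bc: "bcoef k 0 = 1" "bcoef k 1 = 1" "bcoef k (-1) = 0" "bcoef k 2 = 0" "bcoef k (-2) = 0" "bcoef k 3 = 0"
  by (simp_all add: bcoef_def)
lemma sumH: "(\<Sum>n\<in>Hidx. f n) = f (-1) + f 0 + f 1" by (simp add: Hidx_def add.assoc)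
lemma uf:
  assumes "inH1 \<chi>"
  shows "uncert k \<chi> = (cnj (\<chi> (-1)) * \<chi> (-1) + cnj (\<chi> 1) * \<chi> 1)/2 + cnj (\<chi> 0) * \<chi> 0
     - (cnj (\<chi> 0) * \<chi> (-1) + cnj (\<chi> 1) * \<chi> 0) * cnj (cnj (\<chi> 0) * \<chi> (-1) + cnj (\<chi> 1) * \<chi> 0)"
proof -
  have z: "\<chi> (-2) = 0" "\<chi> 2 = 0" using assms by (auto simp: inH1_def Hidx_def)
  show ?thesis
    unfolding uncert_def expect_def inner_H_def sumH xsqop_def x1op_def x2op_def xplus_def xminus_def
    by (simp add: bc z field_simps power2_eq_square)
qed

lemma cn: "cnj z * z = complex_of_real (cmod z ^ 2)"
  by (metis complex_norm_square mult.commute of_real_power)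

lemma uf2:
  assumes "inH1 \<chi>"
  shows "uncert k \<chi> = complex_of_real ((cmod (\<chi> (-1)) ^ 2 + cmod (\<chi> 1) ^ 2)/2 + cmod (\<chi> 0) ^ 2
     - cmod (cnj (\<chi> 0) * \<chi> (-1) + cnj (\<chi> 1) * \<chi> 0) ^ 2)"
proof -
  define P where "P = cnj (\<chi> 0) * \<chi> (-1) + cnj (\<chi> 1) * \<chi> 0"
  have "P * cnj P = complex_of_real (cmod P ^ 2)" by (metis complex_norm_square of_real_power)
  then show ?thesis unfolding uf[OF assms, of k] P_def[symmetric] cn by simp
qed

lemma inner_self: "inner_H \<chi> \<chi> = complex_of_real (cmod (\<chi> (-1)) ^ 2 + cmod (\<chi> 0) ^ 2 + cmod (\<chi> 1) ^ 2)"
  unfolding inner_H_def sumH by (simp add: cn)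

theorem mainTheorem6:
  fixes k :: real
  assumes "k > 0"
  shows "unit_H chi_min \<and> uncert k chi_min = 7/32
         \<and> (\<forall>\<chi>. unit_H \<chi> \<longrightarrow> uncert k \<chi> \<in> \<real> \<and> 7/32 \<le> Re (uncert k \<chi>))"
proof (intro conjI allI impI)
  have cm: "chi_min (-1) = complex_of_real (sqrt 5 / 4)" "chi_min 1 = complex_of_real (sqrt 5 / 4)"
    "chi_min 0 = complex_of_real (sqrt (3/8))" by (simp_all add: chi_min_def)
  have inm: "inH1 chi_min" by (auto simp: inH1_def Hidx_def chi_min_def)
  have s5: "sqrt 5 ^ 2 = 5" "sqrt (3/8) ^ 2 = 3/8" by simp_all
  show "unit_H chi_min" unfolding unit_H_def using inm
    by (simp add: inner_self cm power_divide s5)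
  have "cnj (chi_min 0) * chi_min (-1) + cnj (chi_min 1) * chi_min 0
        = complex_of_real (2 * sqrt (3/8) * (sqrt 5 / 4))" by (simp add: cm)
  hence "cmod (cnj (chi_min 0) * chi_min (-1) + cnj (chi_min 1) * chi_min 0) = 2 * sqrt (3/8) * (sqrt 5 / 4)"
    by (simp only: norm_of_real) simp
  moreover have "(2 * sqrt (3/8) * (sqrt 5 / 4)) ^ 2 = (15/32::real)"
    unfolding power_mult_distrib power_divide s5 by simp
  ultimately have "cmod (cnj (chi_min 0) * chi_min (-1) + cnj (chi_min 1) * chi_min 0) ^ 2 = 15/32"
    by (simp only:)
  moreover have "cmod (chi_min (-1)) ^ 2 = 5/16" "cmod (chi_min 1) ^ 2 = 5/16" "cmod (chi_min 0) ^ 2 = 3/8"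
    by (simp_all add: cm power_divide s5)
  ultimately show "uncert k chi_min = 7/32" unfolding uf2[OF inm] by (simp only:) simp
next
  fix \<chi> assume u: "unit_H \<chi>"
  hence inh: "inH1 \<chi>" and one: "inner_H \<chi> \<chi> = 1" by (auto simp: unit_H_def)
  show "uncert k \<chi> \<in> \<real>" unfolding uf2[OF inh] by simp
  define a where "a = cmod (\<chi> (-1))"
  define b where "b = cmod (\<chi> 0)"
  define c where "c = cmod (\<chi> 1)"
  have sum1: "a^2 + b^2 + c^2 = 1" using one unfolding inner_self a_def b_def c_def
    by (metis of_real_eq_1_iff)
  have "cmod (cnj (\<chi> 0) * \<chi> (-1) + cnj (\<chi> 1) * \<chi> 0) \<le> b * a + c * b"
    unfolding a_def b_def c_def
    by (metis complex_mod_cnj norm_mult norm_triangle_ineq)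
  moreover have "a \<ge> 0" "b \<ge> 0" "c \<ge> 0" by (simp_all add: a_def b_def c_def)
  ultimately have "cmod (cnj (\<chi> 0) * \<chi> (-1) + cnj (\<chi> 1) * \<chi> 0) ^ 2 \<le> (b * a + c * b)^2"
    by (meson norm_ge_zero power_mono)
  also have "\<dots> \<le> 2 * b^2 * (a^2 + c^2)"
  proof -
    have e: "(b * a + c * b)^2 = b^2 * (a+c)^2" by (simp add: power2_eq_square algebra_simps)
    have "(a+c)^2 \<le> 2*(a^2+c^2)" using zero_le_power2[of "a - c"] by (simp add: power2_eq_square algebra_simps)
    then have "b^2 * (a+c)^2 \<le> b^2 * (2*(a^2+c^2))" by (simp add: mult_left_mono)
    then show ?thesis unfolding e by (simp add: algebra_simps)
  qed
  finally have le: "cmod (cnj (\<chi> 0) * \<chi> (-1) + cnj (\<chi> 1) * \<chi> 0) ^ 2 \<le> 2 * b^2 * (a^2 + c^2)" .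
  have "7/32 \<le> (a^2 + c^2)/2 + b^2 - 2 * b^2 * (a^2 + c^2)"
  proof -
    have ac: "a^2 + c^2 = 1 - b^2" using sum1 by simp
    have "(a^2 + c^2)/2 + b^2 - 2 * b^2 * (a^2 + c^2) = 7/32 + 2 * (b^2 - 3/8)^2"
      unfolding ac by (simp add: power2_eq_square field_simps)
    then show ?thesis by simp
  qed
  with le show "7/32 \<le> Re (uncert k \<chi>)" unfolding uf2[OF inh] a_def b_def c_def by simp
qed
end
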